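(* Assume the WLPR scheme $S_{d,\mathbf{w}^\lambda}$ is well defined, with mask $\mathbf{a}=(a_m)_{m\in\mathbb{Z}}$. Then $S_{d,\mathbf{w}^\lambda}$ is odd-symmetric: $a_m=a_{-m}$ for all $m\in\mathbb{Z}$.
   Context: Let $\phi:[0,1]\to[0,1]$ be non-increasing with $\phi(0)=1$, $\omega(x)=\phi(|x|)$ for $|x|\le1$ and $0$ otherwise, $\lambda\in(0,\infty)\setminus\mathbb{N}$, and $w^\lambda_m=\omega(m/\lambda)$, $m\in\mathbb{Z}$. Let $d\ge0$ be an integer and $\Pi_d$ the real polynomials of degree at most $d$. For $i\in\{0,1\}$ let $M_i=\{m\in\mathbb{Z}: m\equiv i\pmod 2,\ |m|<\lambda\}$. The weighted local polynomial regression scheme $S_{d,\mathbf{w}^\lambda}$ maps a real sequence $\mathbf{f}=(f_j)_{j\in\mathbb{Z}}$ to $(S\mathbf{f})_{2j+i}=\hat p(0)$ ($i\in\{0,1\}$, $j\in\mathbb{Z}$), where $\hat p$ minimizes $\sum_{m\in M_i} w^\lambda_m(f_{j+(m+i)/2}-p(m))^2$ over $p\in\Pi_d$; "well defined" means $\hat p(0)$ does not depend on the choice of minimizer. The scheme is then linear, $(S\mathbf{f})_{2j+i}=\sum_{m\in M_i}a_m f_{j+(m+i)/2}$, and its mask is $\mathbf{a}=(a_m)_{m\in\mathbb{Z}}$ with $a_m=0$ for $|m|\ge\lambda$. *)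

theory Defs
  imports "HOL-Computational_Algebra.Polynomial" Complex_Main
begin

definition admissible_phi :: "(real \<Rightarrow> real) \<Rightarrow> bool" where
  "admissible_phi phi \<longleftrightarrow>
     (\<forall>x. 0 \<le> x \<and> x \<le> 1 \<longrightarrow> 0 \<le> phi x \<and> phi x \<le> 1) \<and>
     (\<forall>x y. 0 \<le> x \<and> x \<le> y \<and> y \<le> 1 \<longrightarrow> phi y \<le> phi x) \<and>
     phi 0 = 1"

definition omega :: "(real \<Rightarrow> real) \<Rightarrow> real \<Rightarrow> real" where
  "omega phi x = (if \<bar>x\<bar> \<le> 1 then phi \<bar>x\<bar> else 0)"

definition wlam :: "(real \<Rightarrow> real) \<Rightarrow> real \<Rightarrow> int \<Rightarrow> real" where
  "wlam phi lam m = omega phi (real_of_int m / lam)"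

definition Mset :: "real \<Rightarrow> int \<Rightarrow> int set" where
  "Mset lam i = {m. m mod 2 = i mod 2 \<and> \<bar>real_of_int m\<bar> < lam}"

definition wlpr_cost ::
  "(real \<Rightarrow> real) \<Rightarrow> real \<Rightarrow> (int \<Rightarrow> real) \<Rightarrow> int \<Rightarrow> int \<Rightarrow> real poly \<Rightarrow> real" where
  "wlpr_cost phi lam f i j p =
     (\<Sum>m\<in>Mset lam i. wlam phi lam m * (f (j + (m + i) div 2) - poly p (real_of_int m))\<^sup>2)"

definition wlpr_minimizer ::
  "(real \<Rightarrow> real) \<Rightarrow> real \<Rightarrow> nat \<Rightarrow> (int \<Rightarrow> real) \<Rightarrow> int \<Rightarrow> int \<Rightarrow> real poly \<Rightarrow> bool" where
  "wlpr_minimizer phi lam d f i j p \<longleftrightarrow>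
     degree p \<le> d \<and>
     (\<forall>q. degree q \<le> d \<longrightarrow> wlpr_cost phi lam f i j p \<le> wlpr_cost phi lam f i j q)"

definition wlpr_well_defined :: "(real \<Rightarrow> real) \<Rightarrow> real \<Rightarrow> nat \<Rightarrow> bool" where
  "wlpr_well_defined phi lam d \<longleftrightarrow>
     (\<forall>f i j p q. i \<in> {0, 1} \<longrightarrow>
        wlpr_minimizer phi lam d f i j p \<longrightarrow> wlpr_minimizer phi lam d f i j q \<longrightarrow>
        poly p 0 = poly q 0)"

text \<open>a is the mask: (S f)_{2j+i} = sum over M_i of a_m f_{j+(m+i)/2}, and a_m = 0 for |m| >= lambda.\<close>
definition wlpr_mask :: "(real \<Rightarrow> real) \<Rightarrow> real \<Rightarrow> nat \<Rightarrow> (int \<Rightarrow> real) \<Rightarrow> bool" where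
  "wlpr_mask phi lam d a \<longleftrightarrow>
     (\<forall>m. lam \<le> \<bar>real_of_int m\<bar> \<longrightarrow> a m = 0) \<and>
     (\<forall>f i j p. i \<in> {0, 1} \<longrightarrow> wlpr_minimizer phi lam d f i j p \<longrightarrow>
        poly p 0 = (\<Sum>m\<in>Mset lam i. a m * f (j + (m + i) div 2)))"

end

theory Submission imports Defs begin

definition ipw :: "int set \<Rightarrow> (int \<Rightarrow> real) \<Rightarrow> (int \<Rightarrow> real) \<Rightarrow> (int \<Rightarrow> real) \<Rightarrow> real" where
  "ipw M w u v = (\<Sum>m\<in>M. w m * u m * v m)"

definition Sp :: "nat \<Rightarrow> real poly set" where
  "Sp n = {q. \<forall>k\<ge>n. coeff q k = 0}"

lemma proj_exists:
  assumes fin: "finite M" and wpos: "\<And>m. m \<in> M \<Longrightarrow> 0 \<le> w m"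
  shows "\<exists>p\<in>Sp n. \<forall>q\<in>Sp n. ipw M w (\<lambda>m. F m - poly p (of_int m)) (\<lambda>m. poly q (of_int m)) = 0"
proof (induction n arbitrary: F)
  case 0
  have "Sp 0 = {0}" unfolding Sp_def by (auto simp: poly_eq_iff)
  then show ?case by (auto simp: ipw_def)
next
  case (Suc n)
  obtain p1 where p1: "p1 \<in> Sp n"
    and o1: "\<And>q. q \<in> Sp n \<Longrightarrow> ipw M w (\<lambda>m. F m - poly p1 (of_int m)) (\<lambda>m. poly q (of_int m)) = 0"
    using Suc.IH[of F] by blast
  obtain p2 where p2: "p2 \<in> Sp n"
    and o2: "\<And>q. q \<in> Sp n \<Longrightarrow> ipw M w (\<lambda>m. poly (monom 1 n) (of_int m) - poly p2 (of_int m)) (\<lambda>m. poly q (of_int m)) = 0"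
    using Suc.IH[of "\<lambda>m. poly (monom 1 n) (of_int m)"] by blast
  define h where "h = monom 1 n - p2"
  have hS: "h \<in> Sp (Suc n)" using p2 unfolding h_def Sp_def by (auto simp: coeff_monom)
  have hn: "coeff h n = 1" using p2 unfolding h_def Sp_def by (auto simp: coeff_monom)
  have oh: "\<And>q. q \<in> Sp n \<Longrightarrow> ipw M w (\<lambda>m. poly h (of_int m)) (\<lambda>m. poly q (of_int m)) = 0"
    using o2 unfolding h_def by simp
  define r where "r = (\<lambda>m. F m - poly p1 (of_int m))"
  define hv where "hv = (\<lambda>m. poly h (of_int m))"
  have ipsym: "\<And>u v. ipw M w u v = ipw M w v u" unfolding ipw_def
    by (intro sum.cong) auto
  have ipl: "\<And>u1 u2 v c. ipw M w (\<lambda>m. u1 m - c * u2 m) v = ipw M w u1 v - c * ipw M w u2 v"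
    unfolding ipw_def by (simp add: sum_subtractf sum_distrib_left algebra_simps)
  have ipr: "\<And>u v1 v2. ipw M w u (\<lambda>m. v1 m + v2 m) = ipw M w u v1 + ipw M w u v2"
    unfolding ipw_def by (simp add: sum.distrib algebra_simps)
  have iprs: "\<And>u v c. ipw M w u (\<lambda>m. c * v m) = c * ipw M w u v"
    unfolding ipw_def by (simp add: sum_distrib_left algebra_simps)
  obtain al where
    good: "\<And>s. s \<in> Sp n \<Longrightarrow> ipw M w (\<lambda>m. r m - al * hv m) (\<lambda>m. poly s (of_int m)) = 0"
    and goodh: "ipw M w (\<lambda>m. r m - al * hv m) hv = 0"
  proof (cases "ipw M w hv hv = 0")
    case True
    have z: "\<And>m. m \<in> M \<Longrightarrow> w m * hv m * hv m = 0"
      using True fin wpos unfolding ipw_def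
      by (subst (asm) sum_nonneg_eq_0_iff) (auto simp: mult.assoc)
    have "ipw M w r hv = 0" unfolding ipw_def
      by (rule sum.neutral) (use z in auto)
    then show ?thesis using that[of 0] o1 unfolding r_def by simp
  next
    case False
    show ?thesis
    proof (rule that[of "ipw M w r hv / ipw M w hv hv"])
      fix s assume s: "s \<in> Sp n"
      show "ipw M w (\<lambda>m. r m - ipw M w r hv / ipw M w hv hv * hv m) (\<lambda>m. poly s (of_int m)) = 0"
        using o1[OF s] oh[OF s] unfolding ipl r_def hv_def by simp
    next
      show "ipw M w (\<lambda>m. r m - ipw M w r hv / ipw M w hv hv * hv m) hv = 0"
        using False unfolding ipl by simp
    qed
  qed
  show ?case
  proof (intro bexI ballI)
    show "p1 + smult al h \<in> Sp (Suc n)" using p1 hS unfolding Sp_def by auto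
  next
    fix q assume q: "q \<in> Sp (Suc n)"
    define s where "s = q - smult (coeff q n) h"
    have s: "s \<in> Sp n" unfolding Sp_def
    proof (intro CollectI allI impI)
      fix k assume "n \<le> k"
      then consider "k = n" | "Suc n \<le> k" by linarith
      then show "coeff s k = 0"
        by cases (use q hS hn in \<open>auto simp: s_def Sp_def\<close>)
    qed
    have qe: "(\<lambda>m. poly q (of_int m)) = (\<lambda>m. poly s (of_int m) + coeff q n * hv m)"
      unfolding s_def hv_def by auto
    have re: "(\<lambda>m. F m - poly (p1 + smult al h) (of_int m)) = (\<lambda>m. r m - al * hv m)"
      unfolding r_def hv_def by (auto simp: algebra_simps)
    show "ipw M w (\<lambda>m. F m - poly (p1 + smult al h) (of_int m)) (\<lambda>m. poly q (of_int m)) = 0"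
      unfolding re qe ipr iprs using good[OF s] goodh by simp
  qed
qed

lemma Sp_degree: "q \<in> Sp (Suc d) \<longleftrightarrow> degree q \<le> d"
proof
  assume "q \<in> Sp (Suc d)"
  then show "degree q \<le> d" unfolding Sp_def by (intro degree_le) auto
next
  assume "degree q \<le> d"
  then show "q \<in> Sp (Suc d)" unfolding Sp_def by (auto intro: coeff_eq_0)
qed
lemma Mset_finite: "finite (Mset lam i)"
proof -
  have "Mset lam i \<subseteq> {-\<lceil>lam\<rceil>..\<lceil>lam\<rceil>}"
  proof
    fix m assume "m \<in> Mset lam i"
    then have "\<bar>real_of_int m\<bar> < lam" unfolding Mset_def by auto
    then have "real_of_int \<bar>m\<bar> \<le> real_of_int \<lceil>lam\<rceil>" using le_of_int_ceiling[of lam] by linarith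
    then have "\<bar>m\<bar> \<le> \<lceil>lam\<rceil>" by linarith
    then show "m \<in> {-\<lceil>lam\<rceil>..\<lceil>lam\<rceil>}" by auto
  qed
  then show ?thesis by (rule finite_subset) simp
qed

lemma wlam_nonneg: "admissible_phi phi \<Longrightarrow> 0 \<le> wlam phi lam m"
  unfolding admissible_phi_def wlam_def omega_def by auto

lemma minimizer_exists:
  fixes f :: "int \<Rightarrow> real" and i j :: int
  assumes "admissible_phi phi"
  shows "\<exists>p. wlpr_minimizer phi lam d f i j p"
proof -
  define M where "M = Mset lam i"
  define w where "w = wlam phi lam"
  define F :: "int \<Rightarrow> real" where "F = (\<lambda>m. f (j + (m + i) div 2))"
  have fin: "finite M" unfolding M_def by (rule Mset_finite)
  have wpos: "\<And>m. 0 \<le> w m" unfolding w_def using wlam_nonneg[OF assms] .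
  obtain p where p: "p \<in> Sp (Suc d)"
    and o: "\<And>q. q \<in> Sp (Suc d) \<Longrightarrow> ipw M w (\<lambda>m. F m - poly p (of_int m)) (\<lambda>m. poly q (of_int m)) = 0"
    using proj_exists[where M=M and w=w and n="Suc d" and F=F] fin wpos by blast
  have "wlpr_cost phi lam f i j p \<le> wlpr_cost phi lam f i j q" if q: "degree q \<le> d" for q
  proof -
    have pq: "p - q \<in> Sp (Suc d)" using p q unfolding Sp_degree by (simp add: degree_diff_le)
    have o2: "(\<Sum>m\<in>M. w m * (F m - poly p (of_int m)) * (poly p (of_int m) - poly q (of_int m))) = 0"
      using o[OF pq] unfolding ipw_def by simp
    have "wlpr_cost phi lam f i j q - wlpr_cost phi lam f i j p
       = (\<Sum>m\<in>M. 2 * (w m * (F m - poly p (of_int m)) * (poly p (of_int m) - poly q (of_int m)))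
           + w m * (poly p (of_int m) - poly q (of_int m))^2)"
      unfolding wlpr_cost_def M_def[symmetric] w_def[symmetric] F_def[symmetric] sum_subtractf[symmetric]
      by (intro sum.cong) (auto simp: power2_eq_square algebra_simps F_def)
    also have "\<dots> = (\<Sum>m\<in>M. w m * (poly p (of_int m) - poly q (of_int m))^2)"
      using o2 by (simp add: sum.distrib sum_distrib_left[symmetric])
    also have "\<dots> \<ge> 0" by (intro sum_nonneg mult_nonneg_nonneg wpos) simp
    finally show ?thesis by simp
  qed
  then show ?thesis using p unfolding wlpr_minimizer_def Sp_degree by blast
qed

lemma Mset_neg: "m \<in> Mset lam i \<Longrightarrow> - m \<in> Mset lam i"
proof -
  assume "m \<in> Mset lam i"
  then have "m mod 2 = i mod 2" "\<bar>real_of_int m\<bar> < lam" unfolding Mset_def by auto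
  moreover have "(-m) mod 2 = m mod 2" by presburger
  ultimately show ?thesis unfolding Mset_def by simp
qed

lemma Mset_uminus: "uminus ` Mset lam i = Mset lam i"
proof -
  have "\<And>m. m \<in> Mset lam i \<Longrightarrow> - m \<in> Mset lam i" by (rule Mset_neg)
  then show ?thesis by (metis (no_types, lifting) image_subset_iff minus_minus subsetI subset_antisym image_eqI)
qed

lemma cost_refl:
  "wlpr_cost phi lam (\<lambda>k. f (i - k)) i 0 (pcompose p [:0, -1:]) = wlpr_cost phi lam f i 0 p"
proof -
  have "wlpr_cost phi lam (\<lambda>k. f (i - k)) i 0 (pcompose p [:0, -1:])
     = (\<Sum>m\<in>uminus ` Mset lam i. wlam phi lam m * (f (i - (m + i) div 2) - poly p (- real_of_int m))\<^sup>2)"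
    unfolding wlpr_cost_def Mset_uminus by (simp add: poly_pcompose)
  also have "\<dots> = (\<Sum>m\<in>Mset lam i. wlam phi lam (-m) * (f (i - (-m + i) div 2) - poly p (real_of_int m))\<^sup>2)"
    by (subst sum.reindex) (auto intro: inj_onI)
  also have "\<dots> = wlpr_cost phi lam f i 0 p"
    unfolding wlpr_cost_def
  proof (intro sum.cong refl)
    fix m assume m: "m \<in> Mset lam i"
    then have "m mod 2 = i mod 2" unfolding Mset_def by auto
    then have "i - (-m + i) div 2 = 0 + (m + i) div 2" by presburger
    moreover have "wlam phi lam (-m) = wlam phi lam m" unfolding wlam_def omega_def by simp
    ultimately show "wlam phi lam (-m) * (f (i - (-m + i) div 2) - poly p (real_of_int m))\<^sup>2 =
         wlam phi lam m * (f (0 + (m + i) div 2) - poly p (real_of_int m))\<^sup>2" by simp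
  qed
  finally show ?thesis .
qed

theorem lemma3p5:
  fixes phi :: "real \<Rightarrow> real" and lam :: real and d :: nat and a :: "int \<Rightarrow> real"
  assumes "admissible_phi phi"
    and "0 < lam" and "lam \<notin> \<nat>"
    and "wlpr_well_defined phi lam d"
    and "wlpr_mask phi lam d a"
  shows "\<forall>m. a m = a (- m)"
proof
  fix m
  show "a m = a (- m)"
  proof (cases "lam \<le> \<bar>real_of_int m\<bar>")
    case True
    then show ?thesis using assms(5) unfolding wlpr_mask_def by simp
  next
    case False
    define i where "i = m mod 2"
    have i01: "i \<in> {0, 1}" unfolding i_def by auto
    define k0 where "k0 = (m + i) div 2"
    define f :: "int \<Rightarrow> real" where "f = (\<lambda>k. if k = k0 then 1 else 0)"
    define g where "g = (\<lambda>k. f (i - k))"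
    have mM: "m \<in> Mset lam i" using False unfolding Mset_def i_def by auto
    have mM': "- m \<in> Mset lam i" using mM Mset_uminus by blast
    obtain p where p: "wlpr_minimizer phi lam d f i 0 p"
      using minimizer_exists[OF assms(1)] by blast
    have pr: "wlpr_minimizer phi lam d g i 0 (pcompose p [:0, -1:])"
      unfolding wlpr_minimizer_def
    proof (intro conjI allI impI)
      show "degree (pcompose p [:0, -1:]) \<le> d" using p unfolding wlpr_minimizer_def
        by (simp add: degree_pcompose)
    next
      fix q :: "real poly" assume q: "degree q \<le> d"
      have gg: "(\<lambda>k. g (i - k)) = f" unfolding g_def by simp
      have "wlpr_cost phi lam g i 0 (pcompose p [:0, -1:]) = wlpr_cost phi lam f i 0 p"
        unfolding g_def by (rule cost_refl)
      also have "\<dots> \<le> wlpr_cost phi lam f i 0 (pcompose q [:0, -1:])"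
        using p q unfolding wlpr_minimizer_def by (simp add: degree_pcompose)
      also have "\<dots> = wlpr_cost phi lam g i 0 q"
        using cost_refl[of phi lam g i q] unfolding gg .
      finally show "wlpr_cost phi lam g i 0 (pcompose p [:0, -1:]) \<le> wlpr_cost phi lam g i 0 q" .
    qed
    have e1: "poly p 0 = (\<Sum>m'\<in>Mset lam i. a m' * f (0 + (m' + i) div 2))"
      using assms(5) p i01 unfolding wlpr_mask_def by blast
    have e2: "poly (pcompose p [:0, -1:]) 0 = (\<Sum>m'\<in>Mset lam i. a m' * g (0 + (m' + i) div 2))"
      using assms(5) pr i01 unfolding wlpr_mask_def by blast
    have s1: "(\<Sum>m'\<in>Mset lam i. a m' * f (0 + (m' + i) div 2)) = (\<Sum>m'\<in>Mset lam i. if m' = m then a m' else 0)"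
    proof (intro sum.cong refl)
      fix m' assume "m' \<in> Mset lam i"
      then have "m' mod 2 = i mod 2" unfolding Mset_def by auto
      then have "((m' + i) div 2 = k0) = (m' = m)" unfolding k0_def i_def by presburger
      then show "a m' * f (0 + (m' + i) div 2) = (if m' = m then a m' else 0)" unfolding f_def by simp
    qed
    have s2: "(\<Sum>m'\<in>Mset lam i. a m' * g (0 + (m' + i) div 2)) = (\<Sum>m'\<in>Mset lam i. if m' = - m then a m' else 0)"
    proof (intro sum.cong refl)
      fix m' assume "m' \<in> Mset lam i"
      then have "m' mod 2 = i mod 2" unfolding Mset_def by auto
      then have "((i - (m' + i) div 2) = k0) = (m' = - m)" unfolding k0_def i_def by presburger
      then show "a m' * g (0 + (m' + i) div 2) = (if m' = - m then a m' else 0)" unfolding g_def f_def by simp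
    qed
    have "poly (pcompose p [:0, -1:]) 0 = poly p 0" by (simp add: poly_pcompose)
    then show ?thesis using e1 e2 s1 s2 mM mM' Mset_finite[of lam i]
      by (simp add: sum.delta')
  qed
qed

end
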